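(* Let $\mathbf{k}$ be an algebraically closed field of characteristic zero, $\mathcal{A}=\mathbf{k}[x_1,\ldots,x_n]$, $\mathcal{V}=\bigoplus_{i=1}^n\mathcal{A}\frac{\partial}{\partial x_i}$, $\mathcal{L}_+\subset\mathcal{V}$ the subalgebra of vector fields vanishing at the origin, and $\mathcal{D}$ the Weyl algebra. The map $\psi:\mathcal{D}\otimes U(\mathcal{L}_+)\to\mathcal{A}\# U(\mathcal{V})$ defined by $$\psi\left(x^r\partial^s\right)=x^r\#\left(\frac{\partial}{\partial x_1}\right)^{s_1}\cdots\left(\frac{\partial}{\partial x_n}\right)^{s_n}\ \text{on }\mathcal{D},\qquad \psi\left(x^m\frac{\partial}{\partial x_p}\right)=\sum_{0\leq k\leq m}(-1)^{m-k}\binom{m}{k}x^{m-k}\# x^k\frac{\partial}{\partial x_p}\ \text{on }\mathcal{L}_+\ (m\ne0),$$ extends to a (well-defined) homomorphism of associative algebras.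
   Context: Multi-index notation: $x^r=x_1^{r_1}\cdots x_n^{r_n}$, $\partial^s=(\partial/\partial x_1)^{s_1}\cdots(\partial/\partial x_n)^{s_n}$; $k\le m$ componentwise; $\binom{m}{k}=\prod_i\binom{m_i}{k_i}$; $(-1)^{s}=(-1)^{s_1+\cdots+s_n}$. $\mathcal{L}_+$ is spanned by $x^m\frac{\partial}{\partial x_p}$ with $m\ne 0$. The smash product $\mathcal{A}\# U(\mathcal{V})$ is $\mathcal{A}\otimes U(\mathcal{V})$ with product $(f\# u)(g\# v)=\sum_i f\,u_i^{(1)}(g)\# u_i^{(2)}v$ where $\Delta(u)=\sum_i u_i^{(1)}\otimes u_i^{(2)}$ is the coproduct; in particular $(1\#\eta)(f\#1)=f\#\eta+\eta(f)\#1$ for $\eta\in\mathcal{V}$, $f\in\mathcal{A}$. *)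

theory Defs
  imports "HOL-Computational_Algebra.Polynomial"
begin

text \<open>Terms of the free associative unital k-algebra on generators of type 'g.\<close>
datatype ('k, 'g) aterm =
    Gen 'g
  | Scal 'k
  | Add "('k, 'g) aterm" "('k, 'g) aterm"
  | Mul "('k, 'g) aterm" "('k, 'g) aterm"

definition Neg :: "('k::field, 'g) aterm \<Rightarrow> ('k, 'g) aterm" where
  "Neg t = Mul (Scal (-1)) t"

definition Sub :: "('k::field, 'g) aterm \<Rightarrow> ('k, 'g) aterm \<Rightarrow> ('k, 'g) aterm" where
  "Sub s t = Add s (Neg t)"

definition comm :: "('k::field, 'g) aterm \<Rightarrow> ('k, 'g) aterm \<Rightarrow> ('k, 'g) aterm" where
  "comm s t = Sub (Mul s t) (Mul t s)"

text \<open>Equality in the algebra presented by generators and the relations R: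
  the congruence generated by the axioms of a unital associative k-algebra and R.\<close>
inductive alg_eq :: "(('k::field, 'g) aterm \<times> ('k, 'g) aterm) set
    \<Rightarrow> ('k, 'g) aterm \<Rightarrow> ('k, 'g) aterm \<Rightarrow> bool" for R where
  rel: "(s, t) \<in> R \<Longrightarrow> alg_eq R s t"
| refl: "alg_eq R t t"
| sym: "alg_eq R s t \<Longrightarrow> alg_eq R t s"
| trans: "alg_eq R s t \<Longrightarrow> alg_eq R t u \<Longrightarrow> alg_eq R s u"
| add_cong: "alg_eq R s s' \<Longrightarrow> alg_eq R t t' \<Longrightarrow> alg_eq R (Add s t) (Add s' t')"
| mul_cong: "alg_eq R s s' \<Longrightarrow> alg_eq R t t' \<Longrightarrow> alg_eq R (Mul s t) (Mul s' t')"
| add_assoc: "alg_eq R (Add (Add a b) c) (Add a (Add b c))"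
| add_comm: "alg_eq R (Add a b) (Add b a)"
| add_zero: "alg_eq R (Add (Scal 0) a) a"
| add_neg: "alg_eq R (Add a (Neg a)) (Scal 0)"
| mul_assoc: "alg_eq R (Mul (Mul a b) c) (Mul a (Mul b c))"
| mul_one_l: "alg_eq R (Mul (Scal 1) a) a"
| mul_one_r: "alg_eq R (Mul a (Scal 1)) a"
| distrib_l: "alg_eq R (Mul a (Add b c)) (Add (Mul a b) (Mul a c))"
| distrib_r: "alg_eq R (Mul (Add a b) c) (Add (Mul a c) (Mul b c))"
| scal_add: "alg_eq R (Add (Scal x) (Scal y)) (Scal (x + y))"
| scal_mul: "alg_eq R (Mul (Scal x) (Scal y)) (Scal (x * y))"
| scal_central: "alg_eq R (Mul (Scal x) a) (Mul a (Scal x))"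

text \<open>Substitution of generators = the induced homomorphism of free algebras.\<close>
primrec tsubst :: "('g \<Rightarrow> ('k, 'h) aterm) \<Rightarrow> ('k, 'g) aterm \<Rightarrow> ('k, 'h) aterm" where
  "tsubst \<phi> (Gen g) = \<phi> g"
| "tsubst \<phi> (Scal c) = Scal c"
| "tsubst \<phi> (Add s t) = Add (tsubst \<phi> s) (tsubst \<phi> t)"
| "tsubst \<phi> (Mul s t) = Mul (tsubst \<phi> s) (tsubst \<phi> t)"

primrec gens :: "('k, 'g) aterm \<Rightarrow> 'g set" where
  "gens (Gen g) = {g}"
| "gens (Scal c) = {}"
| "gens (Add s t) = gens s \<union> gens t"
| "gens (Mul s t) = gens s \<union> gens t"

primrec tpow :: "('k::field, 'g) aterm \<Rightarrow> nat \<Rightarrow> ('k, 'g) aterm" where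
  "tpow t 0 = Scal 1"
| "tpow t (Suc k) = Mul t (tpow t k)"

text \<open>Finite sums / products of terms over a finite set (in some enumeration order;
  the order is irrelevant up to alg_eq for sums, and for products of commuting factors).\<close>
definition tsum :: "('a \<Rightarrow> ('k::field, 'g) aterm) \<Rightarrow> 'a set \<Rightarrow> ('k, 'g) aterm" where
  "tsum f S = foldr (\<lambda>x acc. Add (f x) acc) (SOME xs. distinct xs \<and> set xs = S) (Scal 0)"

definition tprod :: "('a \<Rightarrow> ('k::field, 'g) aterm) \<Rightarrow> 'a set \<Rightarrow> ('k, 'g) aterm" where
  "tprod f S = foldr (\<lambda>x acc. Mul (f x) acc) (SOME xs. distinct xs \<and> set xs = S) (Scal 1)"

definition mzero :: "'n \<Rightarrow> nat" where "mzero = (\<lambda>_. 0)"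
definition munit :: "'n \<Rightarrow> 'n \<Rightarrow> nat" where "munit p = (\<lambda>i. if i = p then 1 else 0)"
definition madd :: "('n \<Rightarrow> nat) \<Rightarrow> ('n \<Rightarrow> nat) \<Rightarrow> 'n \<Rightarrow> nat" where
  "madd a b = (\<lambda>i. a i + b i)"
definition msub :: "('n \<Rightarrow> nat) \<Rightarrow> ('n \<Rightarrow> nat) \<Rightarrow> 'n \<Rightarrow> nat" where
  "msub a b = (\<lambda>i. a i - b i)"
definition mabs :: "('n::finite \<Rightarrow> nat) \<Rightarrow> nat" where
  "mabs m = (\<Sum>i\<in>UNIV. m i)"
definition mbinom :: "('n::finite \<Rightarrow> nat) \<Rightarrow> ('n \<Rightarrow> nat) \<Rightarrow> nat" where
  "mbinom m k = (\<Prod>i\<in>UNIV. m i choose k i)"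

text \<open>Bracket of basis vector fields, with G the generator for x^a d/dx_p:
  [x^a d_p, x^b d_q] = b_p x^(a+b-e_p) d_q - a_q x^(a+b-e_q) d_p.\<close>
definition vf_bracket :: "(('n \<Rightarrow> nat) \<Rightarrow> 'n \<Rightarrow> 'g) \<Rightarrow> ('n \<Rightarrow> nat) \<Rightarrow> 'n \<Rightarrow> ('n \<Rightarrow> nat) \<Rightarrow> 'n
    \<Rightarrow> ('k::field, 'g) aterm" where
  "vf_bracket G a p b q =
     Sub (Mul (Scal (of_nat (b p))) (Gen (G (msub (madd a b) (munit p)) q)))
         (Mul (Scal (of_nat (a q))) (Gen (G (msub (madd a b) (munit q)) p)))"

text \<open>Generators: x_i, d_i (of the Weyl algebra D) and the basis x^m d/dx_p (m \<noteq> 0) of L_+.\<close>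
datatype 'n dgen = Xd 'n | Dd 'n | Lp "'n \<Rightarrow> nat" 'n

definition src_gens :: "'n dgen set" where
  "src_gens = range Xd \<union> range Dd \<union> {Lp m p | m p. m \<noteq> mzero}"

definition src_rels :: "(('k::field, 'n dgen) aterm \<times> ('k, 'n dgen) aterm) set" where
  "src_rels =
     {(comm (Gen (Xd i)) (Gen (Xd j)), Scal 0) | i j. True}
   \<union> {(comm (Gen (Dd i)) (Gen (Dd j)), Scal 0) | i j. True}
   \<union> {(comm (Gen (Dd i)) (Gen (Xd j)), Scal (if i = j then 1 else 0)) | i j. True}
   \<union> {(comm (Gen (Lp a p)) (Gen (Lp b q)), vf_bracket Lp a p b q) | a p b q.
        a \<noteq> mzero \<and> b \<noteq> mzero}
   \<union> {(comm (Gen (Lp a p)) (Gen d), Scal 0) | a p d. a \<noteq> mzero \<and> d \<in> range Xd \<union> range Dd}"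

text \<open>Generators: x^m # 1 (monomials of A) and 1 # x^a d/dx_p (basis of V).\<close>
datatype 'n sgen = XA "'n \<Rightarrow> nat" | VF "'n \<Rightarrow> nat" 'n

definition tgt_rels :: "(('k::field, 'n sgen) aterm \<times> ('k, 'n sgen) aterm) set" where
  "tgt_rels =
     {(Mul (Gen (XA a)) (Gen (XA b)), Gen (XA (madd a b))) | a b. True}
   \<union> {(Gen (XA mzero), Scal 1)}
   \<union> {(comm (Gen (VF a p)) (Gen (VF b q)), vf_bracket VF a p b q) | a p b q. True}
   \<union> {(comm (Gen (VF a p)) (Gen (XA b)),
        Mul (Scal (of_nat (b p))) (Gen (XA (msub (madd a b) (munit p))))) | a p b. True}"

definition psi :: "'n::finite dgen \<Rightarrow> ('k::field, 'n sgen) aterm" where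
  "psi g = (case g of
      Xd i \<Rightarrow> Gen (XA (munit i))
    | Dd i \<Rightarrow> Gen (VF mzero i)
    | Lp m p \<Rightarrow> tsum (\<lambda>k. Mul (Scal ((-1) ^ mabs (msub m k) * of_nat (mbinom m k)))
                             (Mul (Gen (XA (msub m k))) (Gen (VF k p))))
                     {k. \<forall>i. k i \<le> m i})"

end

theory Submission
  imports Defs "HOL-Library.FuncSet"
begin

definition B :: "('n \<Rightarrow> nat) \<Rightarrow> ('n \<Rightarrow> nat) set" where
  "B m = {k. \<forall>i. k i \<le> m i}"

definition cc :: "('n::finite \<Rightarrow> nat) \<Rightarrow> ('n \<Rightarrow> nat) \<Rightarrow> int" where
  "cc m k = (-1) ^ mabs (msub m k) * int (mbinom m k)"

lemma B_PiE: "B m = PiE UNIV (\<lambda>i. {..m i})"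
  by (auto simp: B_def PiE_UNIV_domain Pi_def)

lemma finite_B[simp]: "finite (B (m :: 'n::finite \<Rightarrow> nat))"
  unfolding B_PiE by (intro finite_PiE) auto

lemma mbinom_zero: "k \<notin> B m \<Longrightarrow> mbinom m k = 0"
  by (auto simp: B_def mbinom_def not_le)

lemma cc_prod: "cc m k = (\<Prod>i\<in>UNIV. (-1) ^ (m i - k i) * int (m i choose k i))"
  by (simp add: cc_def mabs_def msub_def mbinom_def power_sum prod.distrib)

lemma alt_sum1: "(\<Sum>x\<le>n. (-1::int) ^ (n - x) * int (n choose x)) = (if n = 0 then 1 else 0)"
proof (cases "n = 0")
  case False
  have "(\<Sum>x\<le>n. (-1::int) ^ (n - x) * int (n choose x)) = (-1)^n * (\<Sum>x\<le>n. (-1::int) ^ x * int (n choose x))"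
    unfolding sum_distrib_left
  proof (rule sum.cong)
    fix x assume "x \<in> {..n}"
    then have "x \<le> n" by simp
    then have "(-1::int)^n = (-1)^(n-x) * (-1)^x" by (simp flip: power_add)
    then show "(-1::int) ^ (n - x) * int (n choose x) = (-1)^n * ((-1) ^ x * int (n choose x))"
    proof -
      have "(-1::int)^x * (-1)^x = 1" by (simp flip: power_add)
      then show ?thesis using \<open>(-1::int)^n = (-1)^(n-x) * (-1)^x\<close>
        by (metis (no_types, lifting) mult.assoc mult.right_neutral)
    qed
  qed simp
  also have "\<dots> = 0" using choose_alternating_sum[of n] False by simp
  finally show ?thesis using False by simp
qed simp

lemma sum_B_prod:
  fixes f :: "'n::finite \<Rightarrow> nat \<Rightarrow> 'c::comm_semiring_1"
  shows "(\<Sum>k\<in>B m. \<Prod>i\<in>UNIV. f i (k i)) = (\<Prod>i\<in>UNIV. \<Sum>x\<le>m i. f i x)"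
  unfolding B_PiE by (rule prod_sum_PiE[symmetric]) auto

lemma cc_sum_zero:
  assumes "m \<noteq> mzero"
  shows "(\<Sum>k\<in>B m. cc m k) = 0"
proof -
  obtain i0 where i0: "m i0 \<noteq> 0" using assms by (auto simp: mzero_def)
  have "(\<Sum>k\<in>B m. cc m k) = (\<Prod>i\<in>UNIV. \<Sum>x\<le>m i. (-1::int) ^ (m i - x) * int (m i choose x))"
    unfolding cc_prod by (rule sum_B_prod)
  also have "\<dots> = (\<Prod>i\<in>UNIV. (if m i = 0 then 1 else 0))"
    by (simp only: alt_sum1)
  also have "\<dots> = 0" using i0 by (intro prod_zero) auto
  finally show ?thesis .
qed

lemma prod_UNIV_split: "(\<Prod>i\<in>(UNIV::'n::finite set). f i) = f j * (\<Prod>i\<in>UNIV-{j}. f i)"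
  by (rule prod.remove) auto

lemma choose_Suc_mult: "(n choose Suc m) * Suc m = (n choose m) * (n - m)"
proof (cases n)
  case 0 then show ?thesis by simp
next
  case (Suc n')
  have "Suc m * (Suc n' choose Suc m) = Suc n' * (n' choose m)" by (rule Suc_times_binomial)
  moreover have "(Suc n' - m) * (Suc n' choose m) = Suc n' * ((Suc n' - 1) choose m)" by (rule binomial_absorb_comp)
  ultimately show ?thesis using Suc by (metis mult.commute diff_Suc_1)
qed

lemma aux_mult1: "(A::int) * c = - (Bv * d) \<Longrightarrow> (A*P)*c = -((Bv*P)*d)"
proof -
  assume h: "A * c = - (Bv * d)"
  have "(A*P)*c = P*(A*c)" by (simp add: ac_simps)
  also have "\<dots> = P * (-(Bv*d))" using h by simp
  also have "\<dots> = -((Bv*P)*d)" by (simp add: ac_simps)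
  finally show ?thesis .
qed

lemma aux_mult2: "(A::int) * c = e * Bv \<Longrightarrow> (A*P)*c = e*(Bv*P)"
proof -
  assume h: "A * c = e * Bv"
  have "(A*P)*c = P*(A*c)" by (simp add: ac_simps)
  also have "\<dots> = P * (e*Bv)" using h by simp
  also have "\<dots> = e*(Bv*P)" by (simp add: ac_simps)
  finally show ?thesis .
qed

lemma cc_shift1:
  assumes "k \<in> B a" "k j < a j"
  shows "cc a (madd k (munit j)) * int (k j + 1) = - (cc a k * int (a j - k j))"
proof -
  let ?f = "\<lambda>k i. (-1::int) ^ (a i - k i) * int (a i choose k i)"
  have o: "(\<Prod>i\<in>UNIV-{j}. ?f (madd k (munit j)) i) = (\<Prod>i\<in>UNIV-{j}. ?f k i)"
    by (rule prod.cong) (auto simp: madd_def munit_def)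
  obtain d where d: "a j - k j = Suc d" using assms(2) by (metis Suc_diff_Suc)
  have dd: "a j - Suc (k j) = d" using d by simp
  have bin: "int (a j choose Suc (k j)) * int (Suc (k j)) = int (a j choose k j) * int (a j - k j)"
    using choose_Suc_mult[of "a j" "k j"] by (metis of_nat_mult)
  have "?f (madd k (munit j)) j * int (k j + 1) = - (?f k j * int (a j - k j))"
    using bin by (simp add: madd_def munit_def dd d)
  moreover have "cc a (madd k (munit j)) = ?f (madd k (munit j)) j * (\<Prod>i\<in>UNIV-{j}. ?f (madd k (munit j)) i)"
    unfolding cc_prod by (rule prod_UNIV_split)
  moreover have "cc a k = ?f k j * (\<Prod>i\<in>UNIV-{j}. ?f k i)"
    unfolding cc_prod by (rule prod_UNIV_split)
  ultimately show ?thesis unfolding o by (simp only: aux_mult1)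
qed

lemma cc_shift2:
  shows "cc (madd b (munit p)) (madd l (munit p)) * int (l p + 1) = int (b p + 1) * cc b l"
proof -
  let ?f = "\<lambda>b k i. (-1::int) ^ (b i - k i) * int (b i choose k i)"
  have o: "(\<Prod>i\<in>UNIV-{p}. ?f (madd b (munit p)) (madd l (munit p)) i) = (\<Prod>i\<in>UNIV-{p}. ?f b l i)"
    by (rule prod.cong) (auto simp: madd_def munit_def)
  have bin: "int (Suc (b p) choose Suc (l p)) * int (Suc (l p)) = int (Suc (b p)) * int (b p choose l p)"
    using Suc_times_binomial[of "l p" "b p"] by (metis mult.commute of_nat_mult)
  have e1: "madd b (munit p) p = Suc (b p)" "madd l (munit p) p = Suc (l p)"
    by (auto simp: madd_def munit_def)
  have "?f (madd b (munit p)) (madd l (munit p)) p * int (l p + 1)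
      = (-1)^(b p - l p) * (int (Suc (b p) choose Suc (l p)) * int (Suc (l p)))"
    unfolding e1 by (simp add: ac_simps)
  also have "\<dots> = (-1)^(b p - l p) * (int (Suc (b p)) * int (b p choose l p))" using bin by simp
  also have "\<dots> = int (b p + 1) * ?f b l p" by (simp add: ac_simps)
  finally have h1: "?f (madd b (munit p)) (madd l (munit p)) p * int (l p + 1) = int (b p + 1) * ?f b l p" .
  have h2: "cc (madd b (munit p)) (madd l (munit p)) = ?f (madd b (munit p)) (madd l (munit p)) p * (\<Prod>i\<in>UNIV-{p}. ?f (madd b (munit p)) (madd l (munit p)) i)"
    unfolding cc_prod by (rule prod_UNIV_split)
  have h3: "cc b l = ?f b l p * (\<Prod>i\<in>UNIV-{p}. ?f b l i)"
    unfolding cc_prod by (rule prod_UNIV_split)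
  show ?thesis unfolding h2 h3 o by (rule aux_mult2[OF h1])
qed

lemma mabs_add_sub:
  assumes "k \<in> B a" "l \<in> B c"
  shows "mabs (msub a k) + mabs (msub c l) = mabs (msub (madd a c) (madd k l))"
  using assms unfolding mabs_def msub_def madd_def B_def
  by (simp add: sum.distrib[symmetric])

lemma mbinom_sum:
  "(\<Sum>k\<in>B j. mbinom a k * mbinom c (msub j k)) = mbinom (madd a c) j"
proof -
  have "(\<Sum>k\<in>B j. mbinom a k * mbinom c (msub j k))
      = (\<Sum>k\<in>B j. \<Prod>i\<in>UNIV. (a i choose k i) * (c i choose (j i - k i)))"
    by (simp add: mbinom_def msub_def prod.distrib)
  also have "\<dots> = (\<Prod>i\<in>UNIV. \<Sum>x\<le>j i. (a i choose x) * (c i choose (j i - x)))"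
    by (rule sum_B_prod)
  also have "\<dots> = mbinom (madd a c) j"
    by (simp add: vandermonde mbinom_def madd_def)
  finally show ?thesis .
qed

lemma eq_madd_iff: "(j = madd k l) \<longleftrightarrow> (k \<in> B j \<and> l = msub j k)"
  by (auto simp: B_def madd_def msub_def fun_eq_iff)

lemma cc_vandermonde:
  assumes "j \<in> B (madd a c)"
  shows "(\<Sum>k\<in>B a. \<Sum>l\<in>B c. if j = madd k l then cc a k * cc c l else 0) = cc (madd a c) j"
proof -
  define sg where "sg = (-1::int) ^ mabs (msub (madd a c) j)"
  have "(\<Sum>k\<in>B a. \<Sum>l\<in>B c. if j = madd k l then cc a k * cc c l else 0)
     = (\<Sum>k\<in>B a. \<Sum>l\<in>B c. sg * int (if j = madd k l then mbinom a k * mbinom c l else 0))"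
  proof (rule sum.cong[OF HOL.refl], rule sum.cong[OF HOL.refl])
    fix k l assume kl: "k \<in> B a" "l \<in> B c"
    show "(if j = madd k l then cc a k * cc c l else 0) = sg * int (if j = madd k l then mbinom a k * mbinom c l else 0)"
    proof (cases "j = madd k l")
      case True
      have "(-1::int)^mabs (msub a k) * (-1)^mabs (msub c l) = sg"
        unfolding sg_def True mabs_add_sub[OF kl, symmetric] by (simp add: power_add)
      then show ?thesis using True unfolding cc_def by (simp add: algebra_simps)
    qed simp
  qed
  also have "\<dots> = sg * int (\<Sum>k\<in>B a. \<Sum>l\<in>B c. if j = madd k l then mbinom a k * mbinom c l else 0)"
    by (simp add: sum_distrib_left)
  also have "(\<Sum>k\<in>B a. \<Sum>l\<in>B c. if j = madd k l then mbinom a k * mbinom c l else 0)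
     = (\<Sum>k\<in>B a. if k \<in> B j then mbinom a k * mbinom c (msub j k) else 0)"
  proof (rule sum.cong[OF HOL.refl])
    fix k assume "k \<in> B a"
    show "(\<Sum>l\<in>B c. if j = madd k l then mbinom a k * mbinom c l else 0)
        = (if k \<in> B j then mbinom a k * mbinom c (msub j k) else 0)"
    proof (cases "k \<in> B j")
      case True
      then have "(\<Sum>l\<in>B c. if j = madd k l then mbinom a k * mbinom c l else 0)
          = (\<Sum>l\<in>B c. if msub j k = l then mbinom a k * mbinom c l else 0)"
        by (intro sum.cong HOL.refl) (auto simp: eq_madd_iff)
      also have "\<dots> = (if msub j k \<in> B c then mbinom a k * mbinom c (msub j k) else 0)"
        by (simp add: sum.delta)
      also have "\<dots> = mbinom a k * mbinom c (msub j k)"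
        using mbinom_zero[of "msub j k" c] by auto
      finally show ?thesis using True by simp
    next
      case False
      then show ?thesis by (auto simp: eq_madd_iff)
    qed
  qed
  also have "\<dots> = (\<Sum>k\<in>B a \<inter> B j. mbinom a k * mbinom c (msub j k))"
    by (rule sum.inter_restrict[symmetric]) simp
  also have "\<dots> = (\<Sum>k\<in>B j. mbinom a k * mbinom c (msub j k))"
    by (rule sum.mono_neutral_left) (auto, metis mbinom_zero not_gr0)
  also have "\<dots> = mbinom (madd a c) j" by (rule mbinom_sum)
  finally show ?thesis by (simp add: cc_def sg_def)
qed

lemma alg_eq_equivp: "equivp (alg_eq R)"
  by (intro equivpI reflpI sympI transpI) (auto intro: alg_eq.intros)

quotient_type (overloaded) ('k, 'n) T = "('k::field, 'n sgen) aterm" / "alg_eq tgt_rels"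
  by (rule alg_eq_equivp)

instantiation T :: (field, type) ring
begin
lift_definition zero_T :: "('a, 'b) T" is "Scal 0" .
lift_definition plus_T :: "('a, 'b) T \<Rightarrow> ('a, 'b) T \<Rightarrow> ('a, 'b) T" is Add
  by (rule alg_eq.add_cong)
lift_definition times_T :: "('a, 'b) T \<Rightarrow> ('a, 'b) T \<Rightarrow> ('a, 'b) T" is Mul
  by (rule alg_eq.mul_cong)
lift_definition uminus_T :: "('a, 'b) T \<Rightarrow> ('a, 'b) T" is Neg
  unfolding Neg_def by (intro alg_eq.mul_cong alg_eq.refl)
lift_definition minus_T :: "('a, 'b) T \<Rightarrow> ('a, 'b) T \<Rightarrow> ('a, 'b) T" is Sub
  unfolding Sub_def Neg_def by (intro alg_eq.mul_cong alg_eq.add_cong alg_eq.refl)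
instance
proof
  fix a b c :: "('a, 'b) T"
  show "a + b + c = a + (b + c)" by transfer (rule alg_eq.add_assoc)
  show "a + b = b + a" by transfer (rule alg_eq.add_comm)
  show "0 + a = a" by transfer (rule alg_eq.add_zero)
  show "- a + a = 0" by transfer (meson alg_eq.add_comm alg_eq.add_neg alg_eq.trans)
  show "a - b = a + - b" by transfer (simp add: Sub_def alg_eq.refl)
  show "a * b * c = a * (b * c)" by transfer (rule alg_eq.mul_assoc)
  show "(a + b) * c = a * c + b * c" by transfer (rule alg_eq.distrib_r)
  show "a * (b + c) = a * b + a * c" by transfer (rule alg_eq.distrib_l)
qed
end

instantiation T :: (field, type) monoid_mult
begin
lift_definition one_T :: "('a, 'b) T" is "Scal 1" .
instance
proof
  fix a :: "('a, 'b) T"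
  show "1 * a = a" by transfer (rule alg_eq.mul_one_l)
  show "a * 1 = a" by transfer (rule alg_eq.mul_one_r)
qed
end


abbreviation cl :: "('k::field, 'n sgen) aterm \<Rightarrow> ('k, 'n) T" where "cl \<equiv> abs_T"

lift_definition sc :: "'k \<Rightarrow> ('k::field, 'n) T" is Scal .
lift_definition X :: "('n \<Rightarrow> nat) \<Rightarrow> ('k::field, 'n) T" is "\<lambda>m. Gen (XA m)" .
lift_definition V :: "('n \<Rightarrow> nat) \<Rightarrow> 'n \<Rightarrow> ('k::field, 'n) T" is "\<lambda>m p. Gen (VF m p)" .

lemma cl_Add: "cl (Add s t) = cl s + cl t" by (simp add: plus_T.abs_eq)
lemma cl_Mul: "cl (Mul s t) = cl s * cl t" by (simp add: times_T.abs_eq)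
lemma cl_Scal: "cl (Scal c) = sc c" by (simp add: sc.abs_eq)
lemma cl_Neg: "cl (Neg s) = - cl s" by (simp add: uminus_T.abs_eq)
lemma cl_Sub: "cl (Sub s t) = cl s - cl t" by (simp add: minus_T.abs_eq)
lemma cl_comm: "cl (comm s t) = cl s * cl t - cl t * cl s" by (simp add: comm_def cl_Sub cl_Mul)
lemma cl_XA: "cl (Gen (XA m)) = X m" by (simp add: X.abs_eq)
lemma cl_VF: "cl (Gen (VF m p)) = V m p" by (simp add: V.abs_eq)
lemma cl_rel: "(s, t) \<in> tgt_rels \<Longrightarrow> cl s = cl t"
  by (simp add: T.abs_eq_iff alg_eq.rel)

lemmas cl_simps = cl_Add cl_Mul cl_Scal cl_Neg cl_Sub cl_comm cl_XA cl_VF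

lemma sc_add: "sc x + sc y = sc (x + y)" by transfer (rule alg_eq.scal_add)
lemma sc_mult: "sc x * sc y = sc (x * y)" by transfer (rule alg_eq.scal_mul)
lemma sc_comm: "sc x * a = a * sc x" by transfer (rule alg_eq.scal_central)
lemma sc_0: "sc 0 = 0" by transfer (rule alg_eq.refl)
lemma sc_1: "sc 1 = 1" by transfer (rule alg_eq.refl)
lemma sc_minus: "sc (- x) = - sc x"
  by transfer (metis Neg_def alg_eq.sym alg_eq.scal_mul mult_minus1)

definition \<iota> :: "int \<Rightarrow> ('k::field, 'n) T" where "\<iota> z = sc (of_int z)"

lemma \<iota>_add: "\<iota> (x + y) = \<iota> x + \<iota> y" by (simp add: \<iota>_def sc_add)
lemma \<iota>_mult: "\<iota> (x * y) = \<iota> x * \<iota> y" by (simp add: \<iota>_def sc_mult)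
lemma \<iota>_0[simp]: "\<iota> 0 = 0" by (simp add: \<iota>_def sc_0)
lemma \<iota>_1[simp]: "\<iota> 1 = 1" by (simp add: \<iota>_def sc_1)
lemma \<iota>_minus: "\<iota> (- x) = - \<iota> x" by (simp add: \<iota>_def sc_minus)
lemma \<iota>_diff: "\<iota> (x - y) = \<iota> x - \<iota> y" by (metis diff_conv_add_uminus \<iota>_add \<iota>_minus)
lemma \<iota>_comm: "\<iota> x * a = a * \<iota> x" by (simp add: \<iota>_def sc_comm)
lemma \<iota>_sum: "\<iota> (sum f A) = (\<Sum>x\<in>A. \<iota> (f x))"
  by (induct A rule: infinite_finite_induct) (simp_all add: \<iota>_add)

lemma XX: "X a * X b = X (madd a b)"
  using cl_rel[of "Mul (Gen (XA a)) (Gen (XA b))" "Gen (XA (madd a b))"]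
  by (simp add: tgt_rels_def cl_simps)
lemma X0: "X mzero = 1"
  using cl_rel[of "Gen (XA mzero)" "Scal 1"]
  by (simp add: tgt_rels_def cl_simps sc_1)
lemma VV: "(V a p :: ('k::field,'n) T) * V b q = V b q * V a p
   + (\<iota> (int (b p)) * V (msub (madd a b) (munit p)) q - \<iota> (int (a q)) * V (msub (madd a b) (munit q)) p)"
proof -
  have "(V a p :: ('k,'n) T) * V b q - V b q * V a p = \<iota> (int (b p)) * V (msub (madd a b) (munit p)) q - \<iota> (int (a q)) * V (msub (madd a b) (munit q)) p"
  proof -
    have "(comm (Gen (VF a p)) (Gen (VF b q)), vf_bracket VF a p b q) \<in> (tgt_rels :: (('k::field, 'n sgen) aterm \<times> _) set)"
      unfolding tgt_rels_def by blast
    from cl_rel[OF this] show ?thesis by (simp add: cl_simps vf_bracket_def \<iota>_def)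
  qed
  then show ?thesis by (simp add: algebra_simps)
qed
lemma VX: "(V a p :: ('k::field,'n) T) * X b = X b * V a p + \<iota> (int (b p)) * X (msub (madd a b) (munit p))"
proof -
  have "(V a p :: ('k,'n) T) * X b - X b * V a p = \<iota> (int (b p)) * X (msub (madd a b) (munit p))"
  proof -
    have "(comm (Gen (VF a p)) (Gen (XA b)), Mul (Scal (of_nat (b p))) (Gen (XA (msub (madd a b) (munit p))))) \<in> (tgt_rels :: (('k::field, 'n sgen) aterm \<times> _) set)"
      unfolding tgt_rels_def by blast
    from cl_rel[OF this] show ?thesis by (simp add: cl_simps \<iota>_def)
  qed
  then show ?thesis by (simp add: algebra_simps)
qed


lemma madd_comm: "madd a b = madd b a" by (auto simp: madd_def)
lemma Xcomm: "X a * X b = X b * X a" by (simp add: XX madd_comm)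
lemma \<iota>_left: "a * (\<iota> x * b) = \<iota> x * (a * b)"
  by (metis \<iota>_comm mult.assoc)

definition \<Psi> :: "('n::finite \<Rightarrow> nat) \<Rightarrow> 'n \<Rightarrow> ('k::field, 'n) T" where
  "\<Psi> m p = (\<Sum>k\<in>B m. \<iota> (cc m k) * (X (msub m k) * V k p))"

lemma cl_foldr_sum: "cl (foldr (\<lambda>x acc. Add (f x) acc) xs (Scal 0)) = sum_list (map (\<lambda>x. cl (f x)) xs)"
  by (induct xs) (simp_all add: cl_simps sc_0)

lemma cl_tsum: "finite S \<Longrightarrow> cl (tsum f S) = (\<Sum>x\<in>S. cl (f x))"
proof -
  assume "finite S"
  then have "\<exists>xs. distinct xs \<and> set xs = S" using finite_distinct_list by blast
  then have h: "distinct (SOME xs. distinct xs \<and> set xs = S) \<and> set (SOME xs. distinct xs \<and> set xs = S) = S"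
    by (rule someI_ex)
  define xs where "xs = (SOME xs. distinct xs \<and> set xs = S)"
  have h2: "distinct xs" "set xs = S" using h unfolding xs_def by auto
  have "cl (tsum f S) = sum_list (map (\<lambda>x. cl (f x)) xs)"
    unfolding tsum_def cl_foldr_sum xs_def ..
  also have "\<dots> = (\<Sum>x\<in>set xs. cl (f x))" using h2(1) by (simp add: sum.distinct_set_conv_list)
  finally show ?thesis using h2(2) by simp
qed

lemma cl_psi_Lp: "cl (psi (Lp m p)) = (\<Psi> m p :: ('k::field, 'n::finite) T)"
proof -
  have e: "{k. \<forall>i. k i \<le> m i} = B m" by (simp add: B_def)
  show ?thesis unfolding psi_def \<Psi>_def
    by (simp add: e cl_tsum cl_simps \<iota>_def cc_def)
qed



lemma Psi_X:
  assumes "m \<noteq> mzero"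
  shows "\<Psi> m p * X (munit j) = X (munit j) * (\<Psi> m p :: ('k::field, 'n::finite) T)"
proof -
  let ?e = "munit j :: 'n \<Rightarrow> nat"
  have "\<Psi> m p * X ?e - X ?e * \<Psi> m p
     = (\<Sum>k\<in>B m. \<iota> (cc m k) * (X (msub m k) * V k p) * X ?e - X ?e * (\<iota> (cc m k) * (X (msub m k) * V k p)))"
    unfolding \<Psi>_def sum_distrib_left sum_distrib_right sum_subtractf ..
  also have "\<dots> = (\<Sum>k\<in>B m. \<iota> (cc m k) * (\<iota> (int (?e p)) * X m) :: ('k, 'n) T)"
  proof (rule sum.cong[OF HOL.refl])
    fix k assume k: "k \<in> B m"
    have w: "\<iota> (int (?e p)) * X (madd (msub m k) (msub (madd k ?e) (munit p))) = (\<iota> (int (?e p)) * X m :: ('k, 'n) T)"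
    proof (cases "j = p")
      case True
      have "madd (msub m k) (msub (madd k ?e) (munit p)) = m"
        using k True by (auto simp: madd_def msub_def munit_def B_def fun_eq_iff)
      then show ?thesis by simp
    qed (simp add: munit_def)
    have "(\<iota> (cc m k) :: ('k, 'n) T) * (X (msub m k) * V k p) * X ?e - X ?e * (\<iota> (cc m k) * (X (msub m k) * V k p))
       = \<iota> (cc m k) * (X (msub m k) * (V k p * X ?e)) - \<iota> (cc m k) * (X ?e * X (msub m k) * V k p)"
      by (simp add: \<iota>_left[of "X ?e"] mult.assoc)
    also have "\<dots> = \<iota> (cc m k) * (X (msub m k) * (\<iota> (int (?e p)) * X (msub (madd k ?e) (munit p))))"
      unfolding VX Xcomm[of ?e "msub m k"] distrib_left by (simp add: mult.assoc)
    also have "\<dots> = \<iota> (cc m k) * (\<iota> (int (?e p)) * X (madd (msub m k) (msub (madd k ?e) (munit p))))"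
      by (simp add: \<iota>_left[of "X (msub m k)"] XX)
    also have "\<dots> = \<iota> (cc m k) * (\<iota> (int (?e p)) * X m)" by (simp only: w)
    finally show "(\<iota> (cc m k) :: ('k, 'n) T) * (X (msub m k) * V k p) * X ?e - X ?e * (\<iota> (cc m k) * (X (msub m k) * V k p))
       = \<iota> (cc m k) * (\<iota> (int (?e p)) * X m)" .
  qed
  also have "\<dots> = \<iota> (\<Sum>k\<in>B m. cc m k) * (\<iota> (int (?e p)) * X m)"
    by (simp add: \<iota>_sum sum_distrib_right)
  also have "\<dots> = 0" using cc_sum_zero[OF assms] by simp
  finally show ?thesis by simp
qed


lemma sum_shift1:
  "(\<Sum>k\<in>{k\<in>B m. 0 < k j}. f k) = (\<Sum>k\<in>{k\<in>B m. k j < m j}. f (madd k (munit j)))"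
  by (rule sum.reindex_bij_witness[symmetric, of _ "\<lambda>k. msub k (munit j)" "\<lambda>k. madd k (munit j)"])
     (auto simp: B_def madd_def msub_def munit_def fun_eq_iff Suc_le_eq split: if_splits dest: spec[where x=j] spec[where x=p])

lemma sum_shift2:
  "(\<Sum>l\<in>{l\<in>B (madd b (munit p)). 0 < l p}. f l) = (\<Sum>l\<in>B b. f (madd l (munit p)))"
  by (rule sum.reindex_bij_witness[symmetric, of _ "\<lambda>k. msub k (munit p)" "\<lambda>k. madd k (munit p)"])
     (auto simp: B_def madd_def msub_def munit_def fun_eq_iff Suc_le_eq split: if_splits dest: spec[where x=j] spec[where x=p])

lemma madd_mzero[simp]: "madd k mzero = k" "madd mzero k = k"
  by (auto simp: madd_def mzero_def)

lemma Psi_V_term: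
  "(\<iota> c :: ('k::field, 'n) T) * (X u * V k p) * V mzero j - V mzero j * (\<iota> c * (X u * V k p))
   = - (\<iota> (c * int (k j)) * (X u * V (msub k (munit j)) p) + \<iota> (c * int (u j)) * (X (msub u (munit j)) * V k p))"
proof -
  have vv: "V k p * V mzero j = V mzero j * V k p - \<iota> (int (k j)) * V (msub k (munit j)) p"
    using VV[of k p mzero j] by (simp add: mzero_def madd_def)
  have vx: "V mzero j * X u = X u * V mzero j + \<iota> (int (u j)) * (X (msub u (munit j)) :: ('k, 'n) T)"
    using VX[of mzero j u] by simp
  have "(\<iota> c :: ('k::field, 'n) T) * (X u * V k p) * V mzero j - V mzero j * (\<iota> c * (X u * V k p))
     = \<iota> c * (X u * (V k p * V mzero j)) - \<iota> c * ((V mzero j * X u) * V k p)"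
    by (simp add: \<iota>_left[of "V mzero j"] mult.assoc)
  also have "\<dots> = \<iota> c * (X u * (V mzero j * V k p)) - \<iota> c * (X u * (\<iota> (int (k j)) * V (msub k (munit j)) p))
      - \<iota> c * (X u * V mzero j * V k p) - \<iota> c * (\<iota> (int (u j)) * X (msub u (munit j)) * V k p)"
    unfolding vv vx by (simp add: algebra_simps)
  also have "\<dots> = - (\<iota> (c * int (k j)) * (X u * V (msub k (munit j)) p) + \<iota> (c * int (u j)) * (X (msub u (munit j)) * V k p))"
    by (simp add: \<iota>_left[of "X u"] \<iota>_mult mult.assoc algebra_simps)
  finally show ?thesis .
qed


lemma Psi_V: "\<Psi> m p * V mzero j = V mzero j * (\<Psi> m p :: ('k::field, 'n::finite) T)"
proof -
  let ?e = "munit j :: 'n \<Rightarrow> nat"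
  let ?g = "\<lambda>k. (X (msub (msub m k) ?e) * V k p :: ('k, 'n) T)"
  let ?A1 = "{k\<in>B m. 0 < k j}" and ?A2 = "{k\<in>B m. k j < m j}"
  define S1 where "S1 = (\<Sum>k\<in>B m. (\<iota> (cc m k * int (k j)) :: ('k, 'n) T) * (X (msub m k) * V (msub k ?e) p))"
  define S2 where "S2 = (\<Sum>k\<in>B m. (\<iota> (cc m k * int (msub m k j)) :: ('k, 'n) T) * ?g k)"
  have "\<Psi> m p * V mzero j - V mzero j * \<Psi> m p
     = (\<Sum>k\<in>B m. (\<iota> (cc m k) :: ('k, 'n) T) * (X (msub m k) * V k p) * V mzero j - V mzero j * (\<iota> (cc m k) * (X (msub m k) * V k p)))"
    unfolding \<Psi>_def sum_distrib_left sum_distrib_right sum_subtractf ..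
  also have "\<dots> = - (S1 + S2)"
    unfolding Psi_V_term S1_def S2_def sum.distrib[symmetric] sum_negf ..
  also have "S1 = - S2"
  proof -
    have "S1 = (\<Sum>k\<in>?A1. (\<iota> (cc m k * int (k j)) :: ('k, 'n) T) * (X (msub m k) * V (msub k ?e) p))"
      unfolding S1_def by (rule sum.mono_neutral_right) auto
    also have "\<dots> = (\<Sum>k\<in>?A2. (\<iota> (cc m (madd k ?e) * int (madd k ?e j)) :: ('k, 'n) T)
                     * (X (msub m (madd k ?e)) * V (msub (madd k ?e) ?e) p))"
      by (rule sum_shift1)
    also have "\<dots> = (\<Sum>k\<in>?A2. - ((\<iota> (cc m k * int (msub m k j)) :: ('k, 'n) T) * ?g k))"
    proof (rule sum.cong[OF HOL.refl])
      fix k assume k: "k \<in> ?A2"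
      have e1: "madd k ?e j = k j + 1" "msub (madd k ?e) ?e = k" "msub m (madd k ?e) = msub (msub m k) ?e"
        by (auto simp: madd_def msub_def munit_def fun_eq_iff)
      have e2: "cc m (madd k ?e) * int (k j + 1) = - (cc m k * int (msub m k j))"
        using cc_shift1[of k m j] k by (simp add: msub_def)
      show "(\<iota> (cc m (madd k ?e) * int (madd k ?e j)) :: ('k, 'n) T) * (X (msub m (madd k ?e)) * V (msub (madd k ?e) ?e) p)
          = - ((\<iota> (cc m k * int (msub m k j)) :: ('k, 'n) T) * ?g k)"
        unfolding e1 e2 \<iota>_minus by simp
    qed
    also have "\<dots> = - (\<Sum>k\<in>?A2. (\<iota> (cc m k * int (msub m k j)) :: ('k, 'n) T) * ?g k)"
      by (simp add: sum_negf)
    also have "(\<Sum>k\<in>?A2. (\<iota> (cc m k * int (msub m k j)) :: ('k, 'n) T) * ?g k) = S2"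
      unfolding S2_def
    proof (rule sum.mono_neutral_left)
      show "\<forall>k\<in>B m - ?A2. (\<iota> (cc m k * int (msub m k j)) :: ('k, 'n) T) * ?g k = 0"
      proof
        fix k assume "k \<in> B m - ?A2"
        then have "k j = m j" by (auto simp: B_def intro: le_antisym)
        then show "(\<iota> (cc m k * int (msub m k j)) :: ('k, 'n) T) * ?g k = 0" by (simp add: msub_def)
      qed
    qed auto
    finally show ?thesis .
  qed
  finally show ?thesis by simp
qed


lemma \<iota>_mult2: "(\<iota> x * A) * (\<iota> y * Bv) = \<iota> (x * y) * (A * Bv :: ('k::field, 'n) T)"
  by (simp add: mult.assoc \<iota>_left[of A] \<iota>_mult)

lemma XVXV: "(X u * V k p) * (X w * V l q) = X (madd u w) * (V k p * V l q)
    + \<iota> (int (w p)) * (X (madd u (msub (madd k w) (munit p))) * V l q :: ('k::field, 'n) T)"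
proof -
  have "(X u * V k p) * (X w * V l q) = X u * (V k p * X w) * (V l q :: ('k, 'n) T)"
    by (simp add: mult.assoc)
  also have "\<dots> = X u * X w * V k p * V l q + X u * (\<iota> (int (w p)) * X (msub (madd k w) (munit p))) * V l q"
    unfolding VX by (simp add: algebra_simps)
  also have "\<dots> = X (madd u w) * (V k p * V l q)
    + \<iota> (int (w p)) * (X (madd u (msub (madd k w) (munit p))) * V l q)"
    by (simp add: XX \<iota>_left[of "X u"] mult.assoc)
  finally show ?thesis .
qed

lemma E_expand: "(X u * V k p) * (X w * V l q) - (X w * V l q) * (X u * V k p)
  = X (madd u w) * (\<iota> (int (l p)) * V (msub (madd k l) (munit p)) q - \<iota> (int (k q)) * V (msub (madd k l) (munit q)) p)
   + \<iota> (int (w p)) * (X (madd u (msub (madd k w) (munit p))) * V l q)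
   - \<iota> (int (u q)) * (X (madd w (msub (madd l u) (munit q))) * V k p :: ('k::field, 'n) T)"
proof -
  have vv: "V k p * V l q - V l q * V k p = \<iota> (int (l p)) * V (msub (madd k l) (munit p)) q - \<iota> (int (k q)) * (V (msub (madd k l) (munit q)) p :: ('k, 'n) T)"
    using VV[of k p l q] by (simp add: algebra_simps)
  have "(X u * V k p) * (X w * V l q) - (X w * V l q) * (X u * V k p)
    = X (madd u w) * (V k p * V l q - V l q * V k p)
   + \<iota> (int (w p)) * (X (madd u (msub (madd k w) (munit p))) * V l q)
   - \<iota> (int (u q)) * (X (madd w (msub (madd l u) (munit q))) * (V k p :: ('k, 'n) T))"
    unfolding XVXV madd_comm[of w u] by (simp add: algebra_simps)
  then show ?thesis unfolding vv .
qed

lemma Vconv: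
  "(\<Sum>k\<in>B a. \<Sum>l\<in>B c. \<iota> (cc a k * cc c l) * G (madd k l))
   = (\<Sum>j\<in>B (madd a c). \<iota> (cc (madd a c) j) * (G j :: ('k::field, 'n::finite) T))"
proof -
  have "(\<Sum>k\<in>B a. \<Sum>l\<in>B c. \<iota> (cc a k * cc c l) * G (madd k l))
     = (\<Sum>k\<in>B a. \<Sum>l\<in>B c. \<Sum>j\<in>B (madd a c). \<iota> (if j = madd k l then cc a k * cc c l else 0) * G j)"
  proof (rule sum.cong[OF HOL.refl], rule sum.cong[OF HOL.refl])
    fix k l assume kl: "k \<in> B a" "l \<in> B c"
    then have m: "madd k l \<in> B (madd a c)" by (auto simp: B_def madd_def add_mono)
    have "(\<Sum>j\<in>B (madd a c). \<iota> (if j = madd k l then cc a k * cc c l else 0) * G j)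
        = (\<Sum>j\<in>B (madd a c). if j = madd k l then \<iota> (cc a k * cc c l) * G j else 0)"
      by (rule sum.cong) auto
    also have "\<dots> = \<iota> (cc a k * cc c l) * G (madd k l)"
      using m by (simp add: sum.delta')
    finally show "\<iota> (cc a k * cc c l) * G (madd k l) = (\<Sum>j\<in>B (madd a c). \<iota> (if j = madd k l then cc a k * cc c l else 0) * G j)" ..
  qed
  also have "\<dots> = (\<Sum>j\<in>B (madd a c). \<Sum>k\<in>B a. \<Sum>l\<in>B c. \<iota> (if j = madd k l then cc a k * cc c l else 0) * G j)"
    by (subst sum.swap, subst (2) sum.swap) (rule HOL.refl)
  also have "\<dots> = (\<Sum>j\<in>B (madd a c). \<iota> (\<Sum>k\<in>B a. \<Sum>l\<in>B c. if j = madd k l then cc a k * cc c l else 0) * G j)"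
    by (simp add: \<iota>_sum sum_distrib_right)
  also have "\<dots> = (\<Sum>j\<in>B (madd a c). \<iota> (cc (madd a c) j) * G j)"
    by (rule sum.cong[OF HOL.refl]) (simp add: cc_vandermonde)
  finally show ?thesis .
qed


lemma F1:
  "(\<Sum>k\<in>B a. \<Sum>l\<in>B b. \<iota> (cc a k * cc b l * int (l p)) * (X (madd (msub a k) (msub b l)) * V (msub (madd k l) (munit p)) q))
   = \<iota> (int (b p)) * (\<Psi> (msub (madd a b) (munit p)) q :: ('k::field, 'n::finite) T)"
proof (cases "b p = 0")
  case True
  have "(\<Sum>k\<in>B a. \<Sum>l\<in>B b. \<iota> (cc a k * cc b l * int (l p)) * (X (madd (msub a k) (msub b l)) * V (msub (madd k l) (munit p)) q))
      = (\<Sum>k\<in>B a. \<Sum>l\<in>B b. (0 :: ('k, 'n) T))"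
  proof (rule sum.cong[OF HOL.refl], rule sum.cong[OF HOL.refl])
    fix k l assume "l \<in> B b"
    then have "l p = 0" using True by (auto simp: B_def dest: spec[where x=p])
    then show "\<iota> (cc a k * cc b l * int (l p)) * (X (madd (msub a k) (msub b l)) * V (msub (madd k l) (munit p)) q) = (0 :: ('k, 'n) T)"
      by simp
  qed
  then show ?thesis using True by simp
next
  case False
  let ?e = "munit p :: 'n \<Rightarrow> nat"
  define b' where "b' = msub b ?e"
  have bb: "b = madd b' ?e" using False by (auto simp: b'_def madd_def msub_def munit_def fun_eq_iff)
  have ab: "madd a b' = msub (madd a b) ?e"
    using bb by (auto simp: madd_def msub_def munit_def fun_eq_iff)
  define G where "G = (\<lambda>j. X (msub (madd a b') j) * V j q :: ('k, 'n) T)"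
  have "(\<Sum>k\<in>B a. \<Sum>l\<in>B b. \<iota> (cc a k * cc b l * int (l p)) * (X (madd (msub a k) (msub b l)) * V (msub (madd k l) ?e) q))
      = (\<Sum>k\<in>B a. \<iota> (int (b p)) * (\<Sum>l\<in>B b'. \<iota> (cc a k * cc b' l) * G (madd k l)))"
  proof (rule sum.cong[OF HOL.refl])
    fix k assume k: "k \<in> B a"
    let ?f = "\<lambda>l. \<iota> (cc a k * cc b l * int (l p)) * (X (madd (msub a k) (msub b l)) * V (msub (madd k l) ?e) q) :: ('k, 'n) T"
    have "sum ?f (B b) = sum ?f {l\<in>B b. 0 < l p}"
      by (rule sum.mono_neutral_right) auto
    also have "\<dots> = (\<Sum>l\<in>B b'. ?f (madd l ?e))"
    proof -
      have "{l\<in>B b. 0 < l p} = {l\<in>B (madd b' ?e). 0 < l p}" using bb by simp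
      then show ?thesis by (simp only: sum_shift2)
    qed
    also have "\<dots> = (\<Sum>l\<in>B b'. \<iota> (int (b p)) * (\<iota> (cc a k * cc b' l) * G (madd k l)))"
    proof (rule sum.cong[OF HOL.refl])
      fix l assume l: "l \<in> B b'"
      have c1: "cc a k * cc b (madd l ?e) * int (madd l ?e p) = int (b p) * (cc a k * cc b' l)"
        using cc_shift2[of b' p l] unfolding bb[symmetric]
        by (simp add: madd_def munit_def bb algebra_simps)
      have c2: "madd (msub a k) (msub b (madd l ?e)) = msub (madd a b') (madd k l)"
        using k l by (auto simp: bb B_def madd_def msub_def munit_def fun_eq_iff dest!: spec)
      have c3: "msub (madd k (madd l ?e)) ?e = madd k l"
        by (auto simp: madd_def msub_def munit_def fun_eq_iff)
      show "?f (madd l ?e) = \<iota> (int (b p)) * (\<iota> (cc a k * cc b' l) * G (madd k l))"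
        unfolding c1 c2 c3 G_def \<iota>_mult by (simp add: mult.assoc)
    qed
    also have "\<dots> = \<iota> (int (b p)) * (\<Sum>l\<in>B b'. \<iota> (cc a k * cc b' l) * G (madd k l))"
      by (simp add: sum_distrib_left)
    finally show "sum ?f (B b) = \<iota> (int (b p)) * (\<Sum>l\<in>B b'. \<iota> (cc a k * cc b' l) * G (madd k l))" .
  qed
  also have "\<dots> = \<iota> (int (b p)) * (\<Sum>k\<in>B a. \<Sum>l\<in>B b'. \<iota> (cc a k * cc b' l) * G (madd k l))"
    by (simp add: sum_distrib_left)
  also have "\<dots> = \<iota> (int (b p)) * (\<Sum>j\<in>B (madd a b'). \<iota> (cc (madd a b') j) * G j)"
    by (simp only: Vconv)
  finally show ?thesis unfolding \<Psi>_def G_def ab .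
qed


lemma \<iota>_assoc: "\<iota> x * (\<iota> y * Z) = \<iota> (x * y) * (Z :: ('k::field, 'n) T)"
  by (simp add: \<iota>_mult mult.assoc)

lemma Q_term:
  assumes "k \<in> B a"
  shows "\<iota> (int (w p)) * X (madd (msub a k) (msub (madd k w) (munit p)))
       = \<iota> (int (w p)) * (X (msub (madd a w) (munit p)) :: ('k::field, 'n) T)"
proof (cases "w p = 0")
  case False
  have "madd (msub a k) (msub (madd k w) (munit p)) = msub (madd a w) (munit p)"
    using assms False by (auto simp: B_def madd_def msub_def munit_def fun_eq_iff dest!: spec)
  then show ?thesis by simp
qed simp

lemma Psi_Psi:
  assumes a0: "a \<noteq> mzero" and b0: "b \<noteq> mzero"
  shows "\<Psi> a p * \<Psi> b q - \<Psi> b q * \<Psi> a p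
    = \<iota> (int (b p)) * \<Psi> (msub (madd a b) (munit p)) q - \<iota> (int (a q)) * (\<Psi> (msub (madd a b) (munit q)) p :: ('k::field, 'n::finite) T)"
proof -
  define H where "H = (\<lambda>l. \<iota> (cc b l * int (msub b l p)) * (X (msub (madd a (msub b l)) (munit p)) * V l q) :: ('k, 'n) T)"
  define H' where "H' = (\<lambda>k. \<iota> (cc a k * int (msub a k q)) * (X (msub (madd b (msub a k)) (munit q)) * V k p) :: ('k, 'n) T)"
  define A1 where "A1 = (\<Sum>k\<in>B a. \<Sum>l\<in>B b. \<iota> (cc a k * cc b l * int (l p)) * (X (madd (msub a k) (msub b l)) * V (msub (madd k l) (munit p)) q) :: ('k, 'n) T)"
  define A2 where "A2 = (\<Sum>k\<in>B a. \<Sum>l\<in>B b. \<iota> (cc a k * cc b l * int (k q)) * (X (madd (msub a k) (msub b l)) * V (msub (madd k l) (munit q)) p) :: ('k, 'n) T)"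
  have p1: "\<Psi> a p * \<Psi> b q = (\<Sum>k\<in>B a. \<Sum>l\<in>B b. \<iota> (cc a k * cc b l) * ((X (msub a k) * V k p) * (X (msub b l) * V l q)) :: ('k, 'n) T)"
    unfolding \<Psi>_def sum_product \<iota>_mult2 ..
  have p2: "\<Psi> b q * \<Psi> a p = (\<Sum>k\<in>B a. \<Sum>l\<in>B b. \<iota> (cc a k * cc b l) * ((X (msub b l) * V l q) * (X (msub a k) * V k p)) :: ('k, 'n) T)"
    unfolding \<Psi>_def sum_product \<iota>_mult2 by (subst sum.swap) (simp add: mult.commute)
  have "(\<Psi> a p :: ('k, 'n) T) * \<Psi> b q - \<Psi> b q * \<Psi> a p
     = (\<Sum>k\<in>B a. \<Sum>l\<in>B b. \<iota> (cc a k * cc b l) * ((X (msub a k) * V k p) * (X (msub b l) * V l q) - (X (msub b l) * V l q) * (X (msub a k) * V k p)))"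
    unfolding p1 p2 sum_subtractf[symmetric] right_diff_distrib ..
  also have "\<dots> = (\<Sum>k\<in>B a. \<Sum>l\<in>B b. 
        (\<iota> (cc a k * cc b l * int (l p)) * (X (madd (msub a k) (msub b l)) * V (msub (madd k l) (munit p)) q)
       - \<iota> (cc a k * cc b l * int (k q)) * (X (madd (msub a k) (msub b l)) * V (msub (madd k l) (munit q)) p))
       + (\<iota> (cc a k) * H l - \<iota> (cc b l) * H' k))"
  proof (rule sum.cong[OF HOL.refl], rule sum.cong[OF HOL.refl])
    fix k l assume k: "k \<in> B a" and l: "l \<in> B b"
    have q2: "\<iota> (int (msub b l p)) * (X (madd (msub a k) (msub (madd k (msub b l)) (munit p))) * V l q)
        = \<iota> (int (msub b l p)) * (X (msub (madd a (msub b l)) (munit p)) * (V l q :: ('k, 'n) T))"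
      unfolding mult.assoc[symmetric] Q_term[OF k] ..
    have q3: "\<iota> (int (msub a k q)) * (X (madd (msub b l) (msub (madd l (msub a k)) (munit q))) * V k p)
        = \<iota> (int (msub a k q)) * (X (msub (madd b (msub a k)) (munit q)) * (V k p :: ('k, 'n) T))"
      unfolding mult.assoc[symmetric] Q_term[OF l] ..
    show "\<iota> (cc a k * cc b l) * ((X (msub a k) * V k p) * (X (msub b l) * V l q) - (X (msub b l) * V l q) * (X (msub a k) * V k p))
       = (\<iota> (cc a k * cc b l * int (l p)) * (X (madd (msub a k) (msub b l)) * V (msub (madd k l) (munit p)) q)
       - \<iota> (cc a k * cc b l * int (k q)) * (X (madd (msub a k) (msub b l)) * V (msub (madd k l) (munit q)) p))
       + (\<iota> (cc a k) * H l - \<iota> (cc b l) * H' k)"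
      unfolding E_expand q2 q3 H_def H'_def
      by (simp add: \<iota>_left[of "X (madd (msub a k) (msub b l))"] \<iota>_assoc algebra_simps)
  qed
  also have "\<dots> = (A1 - A2) + ((\<Sum>k\<in>B a. \<iota> (cc a k)) * (\<Sum>l\<in>B b. H l) - (\<Sum>k\<in>B a. \<Sum>l\<in>B b. \<iota> (cc b l) * H' k))"
    unfolding A1_def A2_def sum.distrib sum_subtractf sum_product ..
  also have "(\<Sum>k\<in>B a. \<iota> (cc a k)) = (0 :: ('k, 'n) T)"
    using cc_sum_zero[OF a0] by (simp flip: \<iota>_sum)
  also have "(\<Sum>k\<in>B a. \<Sum>l\<in>B b. \<iota> (cc b l) * H' k) = (\<Sum>k\<in>B a. (\<Sum>l\<in>B b. \<iota> (cc b l)) * H' k)"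
    by (simp add: sum_distrib_right)
  also have "(\<Sum>l\<in>B b. \<iota> (cc b l)) = (0 :: ('k, 'n) T)"
    using cc_sum_zero[OF b0] by (simp flip: \<iota>_sum)
  also have "A1 = \<iota> (int (b p)) * \<Psi> (msub (madd a b) (munit p)) q"
    unfolding A1_def by (rule F1)
  also have "A2 = \<iota> (int (a q)) * \<Psi> (msub (madd a b) (munit q)) p"
  proof -
    have "A2 = (\<Sum>k\<in>B b. \<Sum>l\<in>B a. \<iota> (cc b k * cc a l * int (l q)) * (X (madd (msub b k) (msub a l)) * V (msub (madd k l) (munit q)) p))"
      unfolding A2_def by (subst sum.swap) (simp add: mult.commute madd_comm)
    also have "\<dots> = \<iota> (int (a q)) * \<Psi> (msub (madd b a) (munit q)) p" by (rule F1)
    finally show ?thesis by (simp add: madd_comm)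
  qed
  finally show ?thesis by simp
qed

lemma tsubst_Neg: "tsubst \<phi> (Neg a) = Neg (tsubst \<phi> a)" by (simp add: Neg_def)
lemma tsubst_Sub: "tsubst \<phi> (Sub a b) = Sub (tsubst \<phi> a) (tsubst \<phi> b)" by (simp add: Sub_def tsubst_Neg)
lemma tsubst_comm: "tsubst \<phi> (comm a b) = comm (tsubst \<phi> a) (tsubst \<phi> b)" by (simp add: comm_def tsubst_Sub)

lemma sc_of_nat: "sc (of_nat n) = \<iota> (int n)" by (simp add: \<iota>_def)

lemma cl_psi_Gen_Lp: "cl (tsubst psi (Gen (Lp m p))) = (\<Psi> m p :: ('k::field, 'n::finite) T)"
  by (simp add: cl_psi_Lp)

lemma rel_ok:
  assumes "(s, t) \<in> (src_rels :: (('k::field, 'n::finite dgen) aterm \<times> _) set)"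
  shows "cl (tsubst psi s) = (cl (tsubst psi t) :: ('k, 'n) T)"
  using assms unfolding src_rels_def
proof (elim UnE CollectE exE conjE)
  fix i j assume "(s, t) = (comm (Gen (Xd i)) (Gen (Xd j)), Scal 0)"
  then show ?thesis by (simp add: tsubst_comm cl_simps psi_def Xcomm sc_0)
next
  fix i j assume "(s, t) = (comm (Gen (Dd i)) (Gen (Dd j)), Scal 0)"
  moreover have "V mzero i * V mzero j = (V mzero j * V mzero i :: ('k, 'n) T)"
    using VV[of mzero i mzero j] by (simp add: mzero_def)
  ultimately show ?thesis by (simp add: tsubst_comm cl_simps psi_def sc_0)
next
  fix i j assume st: "(s, t) = (comm (Gen (Dd i)) (Gen (Xd j)), Scal (if i = j then 1 else 0))"
  have "V mzero i * X (munit j) - X (munit j) * V mzero i = (\<iota> (int (munit j i)) * X (msub (munit j) (munit i)) :: ('k, 'n) T)"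
    using VX[of mzero i "munit j"] by (simp add: algebra_simps)
  also have "\<dots> = sc (if i = j then 1 else 0)"
  proof (cases "i = j")
    case True
    have "msub (munit j) (munit i) = mzero" using True by (auto simp: msub_def munit_def mzero_def)
    then show ?thesis using True by (simp add: munit_def X0 sc_1)
  qed (simp add: munit_def sc_0)
  finally show ?thesis using st by (simp add: tsubst_comm cl_simps psi_def)
next
  fix a p b q assume st: "(s, t) = (comm (Gen (Lp a p)) (Gen (Lp b q)), vf_bracket Lp a p b q)"
    and a0: "a \<noteq> mzero" and b0: "b \<noteq> mzero"
  show ?thesis using st Psi_Psi[OF a0 b0, of p q]
    by (simp add: tsubst_comm cl_simps vf_bracket_def tsubst_Sub cl_psi_Gen_Lp sc_of_nat
             del: tsubst.simps(1))
next
  fix a p d assume st: "(s, t) = (comm (Gen (Lp a p)) (Gen d), Scal 0)"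
    and a0: "a \<noteq> mzero" and d: "d \<in> range Xd"
  then obtain j where "d = Xd j" by blast
  then show ?thesis using st Psi_X[OF a0, of p j]
    by (simp add: tsubst_comm cl_simps cl_psi_Gen_Lp sc_0 del: tsubst.simps(1)) (simp add: psi_def cl_simps)
next
  fix a p d assume st: "(s, t) = (comm (Gen (Lp a p)) (Gen d), Scal 0)"
    and a0: "a \<noteq> mzero" and d: "d \<in> range Dd"
  then obtain j where "d = Dd j" by blast
  then show ?thesis using st Psi_V[of a p j]
    by (simp add: tsubst_comm cl_simps cl_psi_Gen_Lp sc_0 del: tsubst.simps(1)) (simp add: psi_def cl_simps)
qed


lemma src_to_tgt:
  assumes "alg_eq (src_rels :: (('k::field, 'n::finite dgen) aterm \<times> _) set) s t"
  shows "cl (tsubst psi s) = (cl (tsubst psi t) :: ('k, 'n) T)"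
  using assms
proof (induction rule: alg_eq.induct)
  case (rel s t) then show ?case by (rule rel_ok)
next
  case (scal_central x a) then show ?case by (simp only: tsubst.simps cl_simps sc_comm)
qed (simp_all add: cl_simps tsubst_Neg sc_0 sc_1 sc_add sc_mult algebra_simps)

lemma tsubst_tprod_foldr:
  "tsubst \<phi> (foldr (\<lambda>x acc. Mul (f x) acc) xs (Scal 1)) = foldr (\<lambda>x acc. Mul (tsubst \<phi> (f x)) acc) xs (Scal 1)"
  by (induct xs) simp_all

lemma tsubst_tprod: "tsubst \<phi> (tprod f S) = tprod (\<lambda>x. tsubst \<phi> (f x)) S"
  unfolding tprod_def tsubst_tprod_foldr ..

lemma tsubst_tpow: "tsubst \<phi> (tpow t k) = tpow (tsubst \<phi> t) k"
  by (induct k) simp_all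

lemma cl_tprod_foldr:
  "cl (foldr (\<lambda>x acc. Mul (f x) acc) xs (Scal 1)) = foldr (\<lambda>x acc. cl (f x) * acc) xs 1"
  by (induct xs) (simp_all add: cl_simps sc_1)

lemma cl_tpow: "cl (tpow t k) = cl t ^ k"
  by (induct k) (simp_all add: cl_simps sc_1)

lemma X_pow: "X (munit i) ^ k = (X (\<lambda>j. if j = i then k else 0) :: ('k::field, 'n) T)"
proof (induct k)
  case 0 then show ?case using X0 by (simp add: mzero_def)
next
  case (Suc k) then show ?case
    by (simp add: XX madd_def munit_def) (rule arg_cong[where f=X], auto simp: fun_eq_iff)
qed

lemma X_foldr:
  "distinct xs \<Longrightarrow> foldr (\<lambda>x acc. X (munit x) ^ r x * acc) xs 1 = (X (\<lambda>j. if j \<in> set xs then r j else 0) :: ('k::field, 'n) T)"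
proof (induct xs)
  case Nil then show ?case using X0 by (simp add: mzero_def)
next
  case (Cons x xs)
  then show ?case
    by (simp add: X_pow XX madd_def) (rule arg_cong[where f=X], auto simp: fun_eq_iff)
qed

lemma part2:
  "alg_eq (tgt_rels :: (('k::field, 'n::finite sgen) aterm \<times> _) set)
     (tsubst psi (Mul (tprod (\<lambda>i. tpow (Gen (Xd i)) (r i)) UNIV)
                      (tprod (\<lambda>i. tpow (Gen (Dd i)) (s i)) UNIV)))
     (Mul (Gen (XA r)) (tprod (\<lambda>i. tpow (Gen (VF mzero i)) (s i)) UNIV))"
proof -
  have "\<exists>xs. distinct xs \<and> set xs = (UNIV :: 'n set)" using finite_distinct_list[OF finite_UNIV] by blast
  then have h: "distinct (SOME xs. distinct xs \<and> set xs = (UNIV :: 'n set)) \<and> set (SOME xs. distinct xs \<and> set xs = (UNIV :: 'n set)) = UNIV"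
    by (rule someI_ex)
  define xs where "xs = (SOME xs. distinct xs \<and> set xs = (UNIV :: 'n set))"
  have h2: "distinct xs" "set xs = UNIV" using h unfolding xs_def by auto
  have d: "tsubst psi (tprod (\<lambda>i. tpow (Gen (Dd i)) (s i)) UNIV) = (tprod (\<lambda>i. tpow (Gen (VF mzero i)) (s i)) UNIV :: ('k, 'n sgen) aterm)"
    unfolding tsubst_tprod tsubst_tpow by (simp add: psi_def)
  have "cl (tsubst psi (tprod (\<lambda>i. tpow (Gen (Xd i)) (r i)) UNIV)) = (foldr (\<lambda>x acc. X (munit x) ^ r x * acc) xs 1 :: ('k, 'n) T)"
    unfolding tprod_def tsubst_tprod_foldr cl_tprod_foldr xs_def[symmetric]
    by (simp add: tsubst_tpow cl_tpow psi_def cl_simps)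
  also have "\<dots> = X r" using X_foldr[OF h2(1), of r] h2(2) by simp
  finally have x: "cl (tsubst psi (tprod (\<lambda>i. tpow (Gen (Xd i)) (r i)) UNIV)) = (X r :: ('k, 'n) T)" .
  have "(cl (tsubst psi (Mul (tprod (\<lambda>i. tpow (Gen (Xd i)) (r i)) UNIV)
                      (tprod (\<lambda>i. tpow (Gen (Dd i)) (s i)) UNIV))) :: ('k, 'n) T)
     = cl (tsubst psi (tprod (\<lambda>i. tpow (Gen (Xd i)) (r i)) UNIV)) * cl (tsubst psi (tprod (\<lambda>i. tpow (Gen (Dd i)) (s i)) UNIV))"
    by (simp only: tsubst.simps cl_Mul)
  also have "\<dots> = cl (Mul (Gen (XA r)) (tprod (\<lambda>i. tpow (Gen (VF mzero i)) (s i)) UNIV))"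
    unfolding x d cl_Mul cl_XA ..
  finally show ?thesis by (simp only: T.abs_eq_iff)
qed

theorem lemma3p4:
  assumes alg_closed: "\<forall>f :: 'k::field_char_0 poly. 0 < degree f \<longrightarrow> (\<exists>z. poly f z = 0)"
  shows "(\<forall>s t. gens s \<subseteq> (src_gens :: 'n::finite dgen set) \<and> gens t \<subseteq> src_gens
              \<and> alg_eq (src_rels :: (('k, 'n dgen) aterm \<times> _) set) s t
           \<longrightarrow> alg_eq (tgt_rels :: (('k, 'n sgen) aterm \<times> _) set) (tsubst psi s) (tsubst psi t))
       \<and> (\<forall>r s :: 'n \<Rightarrow> nat.
           alg_eq (tgt_rels :: (('k, 'n sgen) aterm \<times> _) set)
             (tsubst psi (Mul (tprod (\<lambda>i. tpow (Gen (Xd i)) (r i)) UNIV)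
                              (tprod (\<lambda>i. tpow (Gen (Dd i)) (s i)) UNIV)))
             (Mul (Gen (XA r)) (tprod (\<lambda>i. tpow (Gen (VF mzero i)) (s i)) UNIV)))"
proof (intro conjI allI impI)
  fix s t :: "('k, 'n dgen) aterm"
  assume "gens s \<subseteq> src_gens \<and> gens t \<subseteq> src_gens \<and> alg_eq src_rels s t"
  then have "cl (tsubst psi s) = (cl (tsubst psi t) :: ('k, 'n) T)" using src_to_tgt by blast
  then show "alg_eq tgt_rels (tsubst psi s) (tsubst psi t)" by (simp add: T.abs_eq_iff)
next
  fix r s :: "'n \<Rightarrow> nat"
  show "alg_eq (tgt_rels :: (('k, 'n sgen) aterm \<times> _) set)
             (tsubst psi (Mul (tprod (\<lambda>i. tpow (Gen (Xd i)) (r i)) UNIV)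
                              (tprod (\<lambda>i. tpow (Gen (Dd i)) (s i)) UNIV)))
             (Mul (Gen (XA r)) (tprod (\<lambda>i. tpow (Gen (VF mzero i)) (s i)) UNIV))"
    by (rule part2)
qed

end
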